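(* Let $(C,\mathfrak p,\mathfrak d)$ be a regular $q$-cycle coalgebra with $\mathfrak p_{11}^1\ne0$. Then $\mathfrak d=\mathfrak p$, $\mathfrak p_{j0}^1=\delta_{j1}$ for all $j$, and $\mathfrak p$ depends only on $\mathfrak p_{1k}^1$, $k=1,\dots,n-1$, via the recursive formulas (all indices in $\{0,\dots,n-1\}$): $$\mathfrak p_{j1}^1\mathfrak p_{11}^1=\mathfrak p_{11}^1\sum_{a=0}^{j-1}\mathfrak p_{1a}^1\mathfrak p_{1,j-a}^1-\sum_{l=2}^{j}l\,\mathfrak p_{j-l+1,1}^1\mathfrak p_{1l}^1\quad\text{for }j>1;$$ $$(i+j-1)\mathfrak p_{11}^1\,\mathfrak p_{ij}^1=\sum_{\substack{a+b=j\\ 1\le h\le i\\ (a,h)\ne(j,1)}}\mathfrak p_{ia}^h\mathfrak p_{1b}^1\mathfrak p_{h1}^1-\sum_{\substack{c+d=1\\ 1\le h\le i\\ 1\le l\le j\\ (h,l)\ne(i,j)}}\mathfrak p_{ic}^h\mathfrak p_{jd}^l\mathfrak p_{hl}^1\quad\text{for }i,j>1;$$ $$\mathfrak p_{jk}^l=\sum_{\substack{j_1+j_2=j\\ k_1+k_2=k\\ j_1+k_1\ge1\\ j_2+k_2\ge l-1}}\mathfrak p_{j_1k_1}^1\mathfrak p_{j_2k_2}^{l-1}\quad\text{for }l>1.$$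
   Context: $K$ is an algebraically closed field of characteristic $0$ and $n\ge2$. $C$ is the coalgebra dual to $K[y]/\langle y^n\rangle$: basis $x_0,\dots,x_{n-1}$, $\Delta(x_i)=\sum_{j+k=i}x_j\otimes x_k$, $\epsilon(x_i)=\delta_{i0}$; $C\otimes C$ has the tensor product coalgebra structure; Sweedler notation $\Delta(b)=b_{(1)}\otimes b_{(2)}$. For linear maps $\mathfrak p,\mathfrak d\colon C\otimes C\to C$ write $a\cdot b=\mathfrak p(a\otimes b)$, $a:b=\mathfrak d(a\otimes b)$, $\mathfrak p(x_i\otimes x_j)=\sum_{k=0}^{n-1}\mathfrak p_{ij}^kx_k$, $\mathfrak d(x_i\otimes x_j)=\sum_{k=0}^{n-1}\mathfrak d_{ij}^kx_k$, with the convention $\mathfrak p_{ij}^k=\mathfrak d_{ij}^k=0$ if $k\ge n$, $i<0$ or $j<0$; sums over $a+b=j$, $c+d=1$ etc. range over nonnegative integers. A triple $(C,\mathfrak p,\mathfrak d)$ with $\mathfrak p,\mathfrak d$ coalgebra morphisms is a regular $q$-magma coalgebra if there are coalgebra morphisms $a\otimes b\mapsto a^b$, $a\otimes b\mapsto a_b$ from $C\otimes C$ to $C$ with $a^{b_{(1)}}\cdot b_{(2)}=(a\cdot b_{(1)})^{b_{(2)}}=\epsilon(b)a$ and $(a:b_{(2)})_{b_{(1)}}=a_{b_{(2)}}:b_{(1)}=\epsilon(b)a$. It is a regular $q$-cycle coalgebra if moreover for all $a,b,c$: (1) $(a\cdot b_{(1)})\cdot(c:b_{(2)})=(a\cdot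 c_{(2)})\cdot(b\cdot c_{(1)})$; (2) $(a\cdot b_{(1)}):(c\cdot b_{(2)})=(a:c_{(2)})\cdot(b:c_{(1)})$; (3) $(a:b_{(1)}):(c:b_{(2)})=(a:c_{(2)}):(b\cdot c_{(1)})$. *)

theory Defs
  imports "HOL-Computational_Algebra.Polynomial"
begin

text \<open>The coalgebra C has basis x_0,...,x_{n-1}.  A linear map C \<otimes> C \<rightarrow> C is
  encoded by its structure constants: M i j k is the coefficient of x_k in
  M(x_i \<otimes> x_j).\<close>

definition lin_coeffs :: "nat \<Rightarrow> (nat \<Rightarrow> nat \<Rightarrow> nat \<Rightarrow> 'a::field) \<Rightarrow> bool" where
  "lin_coeffs n M \<longleftrightarrow> (\<forall>i j k. (n \<le> i \<or> n \<le> j \<or> n \<le> k) \<longrightarrow> M i j k = 0)"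

definition alg_closed :: "'a::field itself \<Rightarrow> bool" where
  "alg_closed _ \<longleftrightarrow> (\<forall>q::'a poly. 1 \<le> degree q \<longrightarrow> (\<exists>x. poly q x = 0))"

definition bil :: "nat \<Rightarrow> (nat \<Rightarrow> nat \<Rightarrow> nat \<Rightarrow> 'a::field) \<Rightarrow> (nat \<Rightarrow> 'a) \<Rightarrow> (nat \<Rightarrow> 'a) \<Rightarrow> nat \<Rightarrow> 'a" where
  "bil n M u v k = (\<Sum>i<n. \<Sum>j<n. u i * v j * M i j k)"

text \<open>M : C \<otimes> C \<rightarrow> C is a coalgebra morphism (checked on the basis x_i \<otimes> x_j,
  where \<Delta>(x_i \<otimes> x_j) = \<Sum>_{a+b=i, c+d=j} (x_a \<otimes> x_c) \<otimes> (x_b \<otimes> x_d)).\<close>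
definition coalg_morph :: "nat \<Rightarrow> (nat \<Rightarrow> nat \<Rightarrow> nat \<Rightarrow> 'a::field) \<Rightarrow> bool" where
  "coalg_morph n M \<longleftrightarrow>
     (\<forall>i<n. \<forall>j<n. \<forall>k<n. \<forall>l<n.
        (if k + l < n then M i j (k + l) else 0) =
        (\<Sum>a\<le>i. \<Sum>c\<le>j. M a c k * M (i - a) (j - c) l)) \<and>
     (\<forall>i<n. \<forall>j<n. M i j 0 = (if i = 0 \<and> j = 0 then 1 else 0))"

text \<open>Regular q-magma coalgebra: there are coalgebra morphisms L (a \<otimes> b \<mapsto> a^b) and
  R (a \<otimes> b \<mapsto> a_b) with a^{b(1)}\<cdot>b(2) = (a\<cdot>b(1))^{b(2)} = \<epsilon>(b) a and
  (a:b(2))_{b(1)} = a_{b(2)}:b(1) = \<epsilon>(b) a; checked on a = x_i, b = x_j, where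
  \<Delta>(x_j) = \<Sum>_{s+t=j} x_s \<otimes> x_t.\<close>
definition regular_q_magma :: "nat \<Rightarrow> (nat \<Rightarrow> nat \<Rightarrow> nat \<Rightarrow> 'a::field) \<Rightarrow> (nat \<Rightarrow> nat \<Rightarrow> nat \<Rightarrow> 'a) \<Rightarrow> bool" where
  "regular_q_magma n p d \<longleftrightarrow>
     lin_coeffs n p \<and> lin_coeffs n d \<and> coalg_morph n p \<and> coalg_morph n d \<and>
     (\<exists>L R. lin_coeffs n L \<and> lin_coeffs n R \<and> coalg_morph n L \<and> coalg_morph n R \<and>
        (\<forall>i<n. \<forall>j<n. \<forall>k<n.
           (\<Sum>s\<le>j. \<Sum>r<n. L i s r * p r (j - s) k) = (if j = 0 \<and> k = i then 1 else 0) \<and>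
           (\<Sum>s\<le>j. \<Sum>r<n. p i s r * L r (j - s) k) = (if j = 0 \<and> k = i then 1 else 0) \<and>
           (\<Sum>s\<le>j. \<Sum>r<n. d i (j - s) r * R r s k) = (if j = 0 \<and> k = i then 1 else 0) \<and>
           (\<Sum>s\<le>j. \<Sum>r<n. R i (j - s) r * d r s k) = (if j = 0 \<and> k = i then 1 else 0)))"

text \<open>Regular q-cycle coalgebra: the three identities, checked on a = x_i, b = x_j, c = x_l
  (all three sides are trilinear in a, b, c).\<close>
definition regular_q_cycle :: "nat \<Rightarrow> (nat \<Rightarrow> nat \<Rightarrow> nat \<Rightarrow> 'a::field) \<Rightarrow> (nat \<Rightarrow> nat \<Rightarrow> nat \<Rightarrow> 'a) \<Rightarrow> bool" where
  "regular_q_cycle n p d \<longleftrightarrow>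
     regular_q_magma n p d \<and>
     (\<forall>i<n. \<forall>j<n. \<forall>l<n. \<forall>k<n.
        (\<Sum>s\<le>j. bil n p (p i s) (d l (j - s)) k) = (\<Sum>t\<le>l. bil n p (p i (l - t)) (p j t) k) \<and>
        (\<Sum>s\<le>j. bil n d (p i s) (p l (j - s)) k) = (\<Sum>t\<le>l. bil n p (d i (l - t)) (d j t) k) \<and>
        (\<Sum>s\<le>j. bil n d (d i s) (d l (j - s)) k) = (\<Sum>t\<le>l. bil n d (d i (l - t)) (p j t) k))"

end

theory Submission
  imports Defs
begin


definition cmor :: "nat \<Rightarrow> (nat \<Rightarrow> nat \<Rightarrow> nat \<Rightarrow> 'a::field) \<Rightarrow> bool" where
  "cmor n M \<longleftrightarrow> coalg_morph n M \<and> lin_coeffs n M"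

lemma sum_single:
  assumes "finite A" "x0 \<in> A" "\<And>x. x \<in> A \<Longrightarrow> x \<noteq> x0 \<Longrightarrow> f x = 0"
  shows "sum f A = f x0"
proof -
  have "sum f A = f x0 + sum f (A - {x0})" using assms by (simp add: sum.remove)
  also have "sum f (A - {x0}) = 0" using assms by (intro sum.neutral) auto
  finally show ?thesis by simp
qed

lemma sum_upto1: "(\<Sum>c\<le>(1::nat). g c) = g 0 + g 1"
  by (simp add: atMost_Suc add.commute)

lemma bil_left:
  assumes "r0 < n" "\<And>r. r < n \<Longrightarrow> r \<noteq> r0 \<Longrightarrow> u r = 0"
  shows "bil n P u v k = u r0 * (\<Sum>r2<n. v r2 * P r0 r2 k)"
proof -
  have "bil n P u v k = (\<Sum>r1<n. \<Sum>r2<n. u r1 * v r2 * P r1 r2 k)" by (simp add: bil_def)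
  also have "\<dots> = (\<Sum>r2<n. u r0 * v r2 * P r0 r2 k)"
    by (rule sum_single) (use assms in auto)
  also have "\<dots> = u r0 * (\<Sum>r2<n. v r2 * P r0 r2 k)"
    by (simp add: sum_distrib_left mult.assoc)
  finally show ?thesis .
qed

lemma bil_right:
  assumes "r0 < n" "\<And>r. r < n \<Longrightarrow> r \<noteq> r0 \<Longrightarrow> v r = 0"
  shows "bil n P u v k = v r0 * (\<Sum>r1<n. u r1 * P r1 r0 k)"
proof -
  have "bil n P u v k = (\<Sum>r1<n. \<Sum>r2<n. u r1 * v r2 * P r1 r2 k)" by (simp add: bil_def)
  also have "\<dots> = (\<Sum>r1<n. u r1 * v r0 * P r1 r0 k)"
  proof (rule sum.cong)
    fix r1 assume "r1 \<in> {..<n}"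
    show "(\<Sum>r2<n. u r1 * v r2 * P r1 r2 k) = u r1 * v r0 * P r1 r0 k"
      by (rule sum_single) (use assms in auto)
  qed simp
  also have "\<dots> = v r0 * (\<Sum>r1<n. u r1 * P r1 r0 k)"
    by (simp add: sum_distrib_left algebra_simps)
  finally show ?thesis .
qed

lemma sum2_supp:
  assumes "finite A" "finite B" "S \<subseteq> A \<times> B"
    "\<And>x y. x \<in> A \<Longrightarrow> y \<in> B \<Longrightarrow> (x, y) \<notin> S \<Longrightarrow> F x y = 0"
  shows "(\<Sum>x\<in>A. \<Sum>y\<in>B. F x y) = (\<Sum>(x,y)\<in>S. F x y)"
proof -
  have "(\<Sum>x\<in>A. \<Sum>y\<in>B. F x y) = (\<Sum>(x,y)\<in>A \<times> B. F x y)"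
    by (simp add: sum.cartesian_product)
  also have "\<dots> = (\<Sum>(x,y)\<in>S. F x y)"
    using assms by (intro sum.mono_neutral_right) auto
  finally show ?thesis .
qed

context
  fixes n :: nat and M :: "nat \<Rightarrow> nat \<Rightarrow> nat \<Rightarrow> 'a::field_char_0"
  assumes cm: "cmor n M" and n2: "2 \<le> n"
begin

lemma lz: "n \<le> i \<or> n \<le> j \<or> n \<le> k \<Longrightarrow> M i j k = 0"
  using cm unfolding cmor_def lin_coeffs_def by blast

lemma counit: "M i j 0 = (if i = 0 \<and> j = 0 then 1 else 0)"
proof (cases "i < n \<and> j < n")
  case True then show ?thesis using cm unfolding cmor_def coalg_morph_def by blast
next
  case False then show ?thesis using lz[of i j 0] n2 by auto
qed

lemma split1: "i < n \<Longrightarrow> j < n \<Longrightarrow> Suc k < n \<Longrightarrow>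
  M i j (Suc k) = (\<Sum>a\<le>i. \<Sum>c\<le>j. M a c 1 * M (i - a) (j - c) k)"
proof -
  assume h: "i < n" "j < n" "Suc k < n"
  have "\<forall>i<n. \<forall>j<n. \<forall>k<n. \<forall>l<n.
        (if k + l < n then M i j (k + l) else 0) =
        (\<Sum>a\<le>i. \<Sum>c\<le>j. M a c k * M (i - a) (j - c) l)"
    using cm unfolding cmor_def coalg_morph_def by blast
  then have "(if 1 + k < n then M i j (1 + k) else 0) =
        (\<Sum>a\<le>i. \<Sum>c\<le>j. M a c 1 * M (i - a) (j - c) k)"
    using h n2 by (meson Suc_lessD less_le_trans one_less_numeral_iff semiring_norm(76))
  then show ?thesis using h by simp
qed
lemma mraw: "i < n \<Longrightarrow> j < n \<Longrightarrow> k < n \<Longrightarrow> l < n \<Longrightarrow>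
   (if k + l < n then M i j (k + l) else 0) =
        (\<Sum>a\<le>i. \<Sum>c\<le>j. M a c k * M (i - a) (j - c) l)"
  using cm unfolding cmor_def coalg_morph_def by blast

lemma M001: "M 0 0 1 = 0"
proof -
  let ?x = "M 0 0 1"
  have pw: "k < n \<Longrightarrow> M 0 0 k = ?x ^ k" for k
  proof (induction k)
    case 0 then show ?case by (simp add: counit)
  next
    case (Suc k)
    have "M 0 0 (Suc k) = M 0 0 1 * M 0 0 k" using split1[of 0 0 k] Suc.prems n2 by simp
    then show ?case using Suc by simp
  qed
  have "(if 1 + (n - 1) < n then M 0 0 (1 + (n - 1)) else 0) =
        (\<Sum>a\<le>0. \<Sum>c\<le>0. M a c 1 * M (0 - a) (0 - c) (n - 1))"
    using mraw[of 0 0 1 "n - 1"] n2 by simp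
  then have "0 = ?x * ?x ^ (n - 1)" using n2 pw[of "n - 1"] by simp
  then have "?x ^ n = 0" using n2 by (metis Suc_diff_1 less_le_trans pos2 power_Suc)
  then show ?thesis by simp
qed

lemma M00k: "0 < k \<Longrightarrow> M 0 0 k = 0"
proof (induction k)
  case 0 then show ?case by simp
next
  case (Suc k)
  show ?case
  proof (cases "Suc k < n")
    case True
    then have "M 0 0 (Suc k) = M 0 0 1 * M 0 0 k" using split1[of 0 0 k] n2 by simp
    then show ?thesis using M001 by simp
  next
    case False then show ?thesis using lz by simp
  qed
qed

lemma B3: "i + j < k \<Longrightarrow> M i j k = 0"
proof (induction k arbitrary: i j)
  case 0 then show ?case by simp
next
  case (Suc k)
  show ?case
  proof (cases "i < n \<and> j < n \<and> Suc k < n")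
    case True
    have "M i j (Suc k) = (\<Sum>a\<le>i. \<Sum>c\<le>j. M a c 1 * M (i - a) (j - c) k)"
      using True split1 by blast
    also have "\<dots> = 0"
    proof (intro sum.neutral ballI)
      fix a c assume a: "a \<in> {..i}" and c: "c \<in> {..j}"
      show "M a c 1 * M (i - a) (j - c) k = 0"
      proof (cases "a = 0 \<and> c = 0")
        case True then show ?thesis using M001 by simp
      next
        case False
        then have "(i - a) + (j - c) < k" using a c Suc.prems by auto
        then show ?thesis using Suc.IH by simp
      qed
    qed
    finally show ?thesis .
  next
    case False then show ?thesis using lz by auto
  qed
qed

lemma Y1:
  assumes psi: "\<And>c. M 0 c 1 = 0"
  shows "i < k \<Longrightarrow> M i j k = 0"
proof (induction k arbitrary: i j)
  case 0 then show ?case by simp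
next
  case (Suc k)
  show ?case
  proof (cases "i < n \<and> j < n \<and> Suc k < n")
    case True
    have "M i j (Suc k) = (\<Sum>a\<le>i. \<Sum>c\<le>j. M a c 1 * M (i - a) (j - c) k)"
      using True split1 by blast
    also have "\<dots> = 0"
    proof (intro sum.neutral ballI)
      fix a c assume a: "a \<in> {..i}" and c: "c \<in> {..j}"
      show "M a c 1 * M (i - a) (j - c) k = 0"
      proof (cases "a = 0")
        case True then show ?thesis using psi[of c] by simp
      next
        case False
        then have "i - a < k" using a Suc.prems by auto
        then show ?thesis using Suc.IH by simp
      qed
    qed
    finally show ?thesis .
  next
    case False then show ?thesis using lz by auto
  qed
qed

context
  fixes m :: nat
  assumes below: "\<And>c. c < m \<Longrightarrow> M 0 c 1 = 0" and m1: "1 \<le> m"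
begin

lemma V: "i < k \<Longrightarrow> j < m * (k - i) \<Longrightarrow> M i j k = 0"
proof (induction k arbitrary: i j)
  case 0 then show ?case by simp
next
  case (Suc k)
  show ?case
  proof (cases "i < n \<and> j < n \<and> Suc k < n")
    case True
    have "M i j (Suc k) = (\<Sum>a\<le>i. \<Sum>c\<le>j. M a c 1 * M (i - a) (j - c) k)"
      using True split1 by blast
    also have "\<dots> = 0"
    proof (intro sum.neutral ballI)
      fix a c assume a: "a \<in> {..i}" and c: "c \<in> {..j}"
      show "M a c 1 * M (i - a) (j - c) k = 0"
      proof (cases "a = 0")
        case True
        show ?thesis
        proof (cases "c < m")
          case True then show ?thesis using below[of c] \<open>a = 0\<close> by simp
        next
          case False
          have ik: "i < k"
          proof (rule ccontr)
            assume "\<not> i < k"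
            then have "i = k" using Suc.prems by simp
            then have "j < m" using Suc.prems by simp
            then show False using False c by simp
          qed
          have "m * (Suc k - i) = m * (k - i) + m" using ik
            by (simp add: Suc_diff_le less_imp_le)
          then have "j - c < m * (k - i)" using Suc.prems(2) False c by auto
          then show ?thesis using Suc.IH[OF ik] \<open>a = 0\<close> by simp
        qed
      next
        case False
        then have ik: "i - a < k" using a Suc.prems by auto
        have "Suc k - i \<le> k - (i - a)" using False a Suc.prems by auto
        then have "m * (Suc k - i) \<le> m * (k - (i - a))" by simp
        then have "j - c < m * (k - (i - a))" using Suc.prems(2) by linarith
        then show ?thesis using Suc.IH[OF ik] by simp
      qed
    qed
    finally show ?thesis .
  next
    case False then show ?thesis using lz by auto
  qed
qed

lemma W1: "k < n \<Longrightarrow> M k 0 k = M 1 0 1 ^ k"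
proof (induction k)
  case 0 then show ?case by (simp add: counit)
next
  case (Suc k)
  have "M (Suc k) 0 (Suc k) = (\<Sum>a\<le>Suc k. \<Sum>c\<le>0. M a c 1 * M (Suc k - a) (0 - c) k)"
    using Suc.prems split1 by blast
  also have "\<dots> = (\<Sum>a\<le>Suc k. M a 0 1 * M (Suc k - a) 0 k)" by simp
  also have "\<dots> = M 1 0 1 * M (Suc k - 1) 0 k"
  proof (rule sum_single)
    fix a assume a: "a \<in> {..Suc k}" "a \<noteq> 1"
    show "M a 0 1 * M (Suc k - a) 0 k = 0"
    proof (cases "a = 0")
      case True then show ?thesis using M001 by simp
    next
      case False
      then have "Suc k - a < k" using a by auto
      moreover have "0 < m * (k - (Suc k - a))" using m1 False a by auto
      ultimately show ?thesis using V by simp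
    qed
  qed auto
  finally show ?case using Suc by simp
qed

lemma SumK: "k < n \<Longrightarrow> m < n \<Longrightarrow>
   (\<Sum>a\<le>k. \<Sum>c\<le>m. M a c 1 * M (k - a) (m - c) k) = of_nat (k + 1) * M 1 0 1 ^ k * M 0 m 1"
proof (induction k)
  case 0
  have "(\<Sum>a\<le>0. \<Sum>c\<le>m. M a c 1 * M (0 - a) (m - c) 0) = (\<Sum>c\<le>m. M 0 c 1 * M 0 (m - c) 0)" by simp
  also have "\<dots> = M 0 m 1 * M 0 (m - m) 0"
    by (rule sum_single) (auto simp: counit)
  finally show ?case by (simp add: counit)
next
  case (Suc k)
  let ?F = "\<lambda>a c. M a c 1 * M (Suc k - a) (m - c) (Suc k)"
  have "(\<Sum>a\<le>Suc k. \<Sum>c\<le>m. ?F a c) = (\<Sum>(a,c)\<in>{(0,m),(1,0)}. ?F a c)"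
  proof (rule sum2_supp)
    fix a c assume a: "a \<in> {..Suc k}" and c: "c \<in> {..m}" and nS: "(a, c) \<notin> {(0, m), (1, 0)}"
    show "?F a c = 0"
    proof (cases "a = 0")
      case True then have "c < m" using c nS by auto
      then show ?thesis using below True by simp
    next
      case False
      have i: "Suc k - a < Suc k" using False a by auto
      have e: "Suc k - (Suc k - a) = a" using a by auto
      have "m - c < m * a"
      proof (cases "a = 1")
        case True then have "c \<noteq> 0" using nS by auto
        then show ?thesis using True m1 c by auto
      next
        case False2: False
        then have "2 \<le> a" using False by auto
        then have "m * 2 \<le> m * a" by simp
        then show ?thesis using m1 by linarith
      qed
      then show ?thesis using V[OF i] e by simp
    qed
  qed (use m1 in \<open>auto\<close>)
  also have "\<dots> = ?F 0 m + ?F 1 0" using m1 by simp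
  also have "?F 1 0 = M 1 0 1 * M k m (Suc k)" by simp
  also have "M k m (Suc k) = (\<Sum>a\<le>k. \<Sum>c\<le>m. M a c 1 * M (k - a) (m - c) k)"
    using split1[of k m k] Suc.prems by simp
  also have "\<dots> = of_nat (k + 1) * M 1 0 1 ^ k * M 0 m 1" using Suc by simp
  also have "?F 0 m = M 0 m 1 * M 1 0 1 ^ Suc k" using W1[of "Suc k"] Suc.prems by simp
  finally show ?case by (simp add: algebra_simps)
qed

end

lemma psi_zero:
  assumes a0: "M 1 0 1 \<noteq> 0"
  shows "M 0 c 1 = 0"
proof (rule ccontr)
  assume nz: "M 0 c 1 \<noteq> 0"
  define m where "m = (LEAST c. M 0 c 1 \<noteq> 0)"
  have bm: "M 0 m 1 \<noteq> 0" unfolding m_def using nz by (rule LeastI)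
  have below: "\<And>c. c < m \<Longrightarrow> M 0 c 1 = 0" unfolding m_def using not_less_Least by blast
  have m1: "1 \<le> m" using bm M001 by (cases m) auto
  have mn: "m < n" using bm lz by (meson not_le)
  have "(if 1 + (n - 1) < n then M (n - 1) m (1 + (n - 1)) else 0) =
        (\<Sum>a\<le>n - 1. \<Sum>c\<le>m. M a c 1 * M (n - 1 - a) (m - c) (n - 1))"
    using mraw[of "n - 1" m 1 "n - 1"] n2 mn by simp
  also have "\<dots> = of_nat (n - 1 + 1) * M 1 0 1 ^ (n - 1) * M 0 m 1"
    using SumK[OF below m1, of "n - 1"] n2 mn by simp
  finally have "of_nat n * M 1 0 1 ^ (n - 1) * M 0 m 1 = 0" using n2 by simp
  then show False using a0 bm n2 by simp
qed


lemma Fpart: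
  assumes fa: "\<And>a. a < J \<Longrightarrow> M a 0 1 = (if a = 1 then 1 else 0)" and J1: "2 \<le> J"
  shows "1 \<le> r \<Longrightarrow> r < n \<Longrightarrow> i < J + r - 1 \<Longrightarrow> M i 0 r = (if i = r then 1 else 0)"
proof (induction r arbitrary: i)
  case 0 then show ?case by simp
next
  case (Suc r)
  show ?case
  proof (cases "r = 0")
    case True then show ?thesis using fa[of i] Suc.prems by simp
  next
    case r0: False
    show ?thesis
    proof (cases "i < n")
      case False then show ?thesis using lz Suc.prems by auto
    next
      case True
      have "M i 0 (Suc r) = (\<Sum>a\<le>i. \<Sum>c\<le>0. M a c 1 * M (i - a) (0 - c) r)"
        using True Suc.prems n2 split1[of i 0 r] by simp
      also have "\<dots> = (\<Sum>a\<le>i. M a 0 1 * M (i - a) 0 r)" by simp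
      also have "\<dots> = (if 1 \<le> i then M (i - 1) 0 r else 0)"
      proof (cases "1 \<le> i")
        case True
        have "(\<Sum>a\<le>i. M a 0 1 * M (i - a) 0 r) = M 1 0 1 * M (i - 1) 0 r"
        proof (rule sum_single)
          fix a assume a: "a \<in> {..i}" "a \<noteq> 1"
          show "M a 0 1 * M (i - a) 0 r = 0"
          proof (cases "a < J")
            case True then show ?thesis using fa a by simp
          next
            case False
            have "i - a < J + r - 1" "i - a \<noteq> r" using False Suc.prems r0 J1 by auto
            then show ?thesis using Suc.IH[of "i - a"] r0 Suc.prems by simp
          qed
        qed (use True in auto)
        then show ?thesis using True fa[of 1] J1 by auto
      next
        case False then have "i = 0" by simp
        then show ?thesis using M001 by simp
      qed
      also have "\<dots> = (if i = Suc r then 1 else 0)"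
      proof (cases "1 \<le> i")
        case True
        then have "M (i - 1) 0 r = (if i - 1 = r then 1 else 0)"
          using Suc.IH[of "i - 1"] r0 Suc.prems by simp
        then show ?thesis using True by auto
      qed simp
      finally show ?thesis .
    qed
  qed
qed

lemma Gid:
  assumes c0: "\<alpha> 1 \<noteq> 0" and rel: "\<And>j. j < n \<Longrightarrow> \<alpha> j = (\<Sum>r<n. M j 0 r * \<alpha> r)"
  shows "M j 0 1 = (if j = 1 then 1 else 0)"
proof (induction j rule: less_induct)
  case (less j)
  show ?case
  proof (cases "j < n")
    case False then show ?thesis using lz n2 by auto
  next
    case jn: True
    show ?thesis
    proof (cases "j = 0")
      case True then show ?thesis using M001 by simp
    next
      case j0: False
      show ?thesis
      proof (cases "j = 1")
        case True
        have "(\<Sum>r<n. M 1 0 r * \<alpha> r) = M 1 0 1 * \<alpha> 1"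
        proof (rule sum_single)
          fix r assume "r \<in> {..<n}" "r \<noteq> 1"
          then show "M 1 0 r * \<alpha> r = 0"
            by (cases "r = 0") (auto simp: counit B3)
        qed (use n2 in auto)
        then have "\<alpha> 1 = M 1 0 1 * \<alpha> 1" using rel[of 1] n2 by simp
        then show ?thesis using c0 True by simp
      next
        case j1: False
        have fa: "\<And>a. a < j \<Longrightarrow> M a 0 1 = (if a = 1 then 1 else 0)" using less by simp
        have j2: "2 \<le> j" using j0 j1 by simp
        have "(\<Sum>r<n. M j 0 r * \<alpha> r) = (\<Sum>r\<in>{1, j}. M j 0 r * \<alpha> r)"
        proof (rule sum.mono_neutral_right)
          show "\<forall>r\<in>{..<n} - {1, j}. M j 0 r * \<alpha> r = 0"
          proof
            fix r assume r: "r \<in> {..<n} - {1, j}"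
            show "M j 0 r * \<alpha> r = 0"
            proof (cases "r = 0")
              case True then show ?thesis using j0 by (simp add: counit)
            next
              case False
              then have "M j 0 r = (if j = r then 1 else 0)"
                using Fpart[OF fa j2, of r j] r by auto
              then show ?thesis using r by auto
            qed
          qed
        qed (use jn n2 in auto)
        also have "\<dots> = M j 0 1 * \<alpha> 1 + M j 0 j * \<alpha> j" using j1 by simp
        also have "M j 0 j = 1" using Fpart[OF fa j2, of j j] jn j2 by simp
        finally have "\<alpha> j = M j 0 1 * \<alpha> 1 + \<alpha> j" using rel[OF jn] by simp
        then show ?thesis using c0 j1 by simp
      qed
    qed
  qed
qed

context
  assumes fid: "\<And>a. M a 0 1 = (if a = 1 then 1 else 0)"
begin

lemma Fid: "r < n \<Longrightarrow> M i 0 r = (if i = r then 1 else 0)"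
proof (cases "r = 0")
  case True then show ?thesis by (simp add: counit)
next
  case False
  assume rn: "r < n"
  show ?thesis
  proof (cases "i < n")
    case True
    show ?thesis using Fpart[of n r i] fid False rn True n2 by simp
  next
    case False then show ?thesis using lz rn by auto
  qed
qed

lemma Z1: "r < n \<Longrightarrow> 1 \<le> r \<Longrightarrow> i < n \<Longrightarrow>
   M i 1 r = (if r \<le> i + 1 then of_nat r * M (i + 1 - r) 1 1 else 0)"
proof (induction r arbitrary: i)
  case 0 then show ?case by simp
next
  case (Suc r)
  show ?case
  proof (cases "r = 0")
    case True then show ?thesis by simp
  next
    case r0: False
    have "M i 1 (Suc r) = (\<Sum>a\<le>i. \<Sum>c\<le>1. M a c 1 * M (i - a) (1 - c) r)"
      using Suc.prems n2 split1[of i 1 r] by simp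
    also have "\<dots> = (\<Sum>a\<le>i. M a 0 1 * M (i - a) 1 r) + (\<Sum>a\<le>i. M a 1 1 * M (i - a) 0 r)"
      by (simp add: sum_upto1 sum.distrib)
    also have "(\<Sum>a\<le>i. M a 0 1 * M (i - a) 1 r) = (if 1 \<le> i then M (i - 1) 1 r else 0)"
    proof (cases "1 \<le> i")
      case True
      have "(\<Sum>a\<le>i. M a 0 1 * M (i - a) 1 r) = M 1 0 1 * M (i - 1) 1 r"
        by (rule sum_single) (use True fid in auto)
      then show ?thesis using True fid[of 1] by simp
    next
      case False then have "i = 0" by simp
      then show ?thesis using M001 by simp
    qed
    also have "(\<Sum>a\<le>i. M a 1 1 * M (i - a) 0 r) = (if r \<le> i then M (i - r) 1 1 else 0)"
    proof (cases "r \<le> i")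
      case True
      have "(\<Sum>a\<le>i. M a 1 1 * M (i - a) 0 r) = M (i - r) 1 1 * M (i - (i - r)) 0 r"
        by (rule sum_single) (use True Fid Suc.prems in auto)
      then show ?thesis using True Fid Suc.prems by simp
    next
      case False
      have "(\<Sum>a\<le>i. M a 1 1 * M (i - a) 0 r) = 0"
        by (rule sum.neutral) (use False Fid Suc.prems in auto)
      then show ?thesis using False by simp
    qed
    also have "(if 1 \<le> i then M (i - 1) 1 r else 0) = (if r \<le> i then of_nat r * M (i - r) 1 1 else 0)"
    proof (cases "1 \<le> i")
      case True
      then have "M (i - 1) 1 r = (if r \<le> i - 1 + 1 then of_nat r * M (i - 1 + 1 - r) 1 1 else 0)"
        using Suc.IH[of "i - 1"] r0 Suc.prems by simp
      then show ?thesis using True by simp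
    next
      case False then show ?thesis using r0 by simp
    qed
    finally show ?thesis by (auto simp: algebra_simps)
  qed
qed

end

end




lemma cancel:
  assumes "of_nat k * c * x = of_nat j * c * x" "k \<noteq> j" "c \<noteq> 0"
  shows "x = (0::'a::field_char_0)"
proof -
  have "(of_nat k - of_nat j) * c * x = 0" using assms(1) by (simp add: algebra_simps)
  moreover have "of_nat k - (of_nat j::'a) \<noteq> 0" using assms(2) by simp
  ultimately show ?thesis using assms(3) by simp
qed

context
  fixes n :: nat and p d :: "nat \<Rightarrow> nat \<Rightarrow> nat \<Rightarrow> 'a::field_char_0"
  assumes cp: "cmor n p" and cd: "cmor n d" and n2: "2 \<le> n"
    and psip: "\<And>c. p 0 c 1 = 0" and psid: "\<And>c. d 0 c 1 = 0"
    and fidp: "\<And>a. p a 0 1 = (if a = 1 then 1 else 0)"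
    and fidd: "\<And>a. d a 0 1 = (if a = 1 then 1 else 0)"
begin

lemma cntp: "p i j 0 = (if i = 0 \<and> j = 0 then 1 else 0)" using counit[OF cp n2] .
lemma cntd: "d i j 0 = (if i = 0 \<and> j = 0 then 1 else 0)" using counit[OF cd n2] .
lemma Y1p: "i < k \<Longrightarrow> p i j k = 0" using Y1[OF cp n2 psip] .
lemma Y1d: "i < k \<Longrightarrow> d i j k = 0" using Y1[OF cd n2 psid] .
lemma B3p: "i + j < k \<Longrightarrow> p i j k = 0" using B3[OF cp n2] .
lemma B3d: "i + j < k \<Longrightarrow> d i j k = 0" using B3[OF cd n2] .
lemma lzp: "n \<le> i \<or> n \<le> j \<or> n \<le> k \<Longrightarrow> p i j k = 0" using lz[OF cp n2] .
lemma lzd: "n \<le> i \<or> n \<le> j \<or> n \<le> k \<Longrightarrow> d i j k = 0" using lz[OF cd n2] .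

lemma s0p: "r \<noteq> i \<Longrightarrow> p i 0 r = 0"
  using Fid[OF cp n2 fidp, of r i] lzp by (cases "r < n") auto
lemma s0d: "r \<noteq> i \<Longrightarrow> d i 0 r = 0"
  using Fid[OF cd n2 fidd, of r i] lzd by (cases "r < n") auto
lemma d0p: "i < n \<Longrightarrow> p i 0 i = 1" using Fid[OF cp n2 fidp, of i i] by simp
lemma d0d: "i < n \<Longrightarrow> d i 0 i = 1" using Fid[OF cd n2 fidd, of i i] by simp

lemma s1p: "r \<noteq> 1 \<Longrightarrow> p 1 s r = 0"
  by (cases "r = 0") (auto simp: cntp Y1p)
lemma s1d: "r \<noteq> 1 \<Longrightarrow> d 1 s r = 0"
  by (cases "r = 0") (auto simp: cntd Y1d)

lemma Zp: "l < n \<Longrightarrow> 1 \<le> l \<Longrightarrow> p l 1 l = of_nat l * p 1 1 1"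
  using Z1[OF cp n2 fidp, of l l] by simp

lemma Dpow:
  assumes IH: "\<And>a b. a + b < m \<Longrightarrow> d a b 1 = p a b 1"
  shows "1 \<le> r \<Longrightarrow> a + b < m + r - 1 \<Longrightarrow> d a b r = p a b r"
proof (induction r arbitrary: a b)
  case 0 then show ?case by simp
next
  case (Suc r)
  show ?case
  proof (cases "r = 0")
    case True then show ?thesis using IH Suc.prems by simp
  next
    case r0: False
    show ?thesis
    proof (cases "a < n \<and> b < n \<and> Suc r < n")
      case False then show ?thesis using lzp lzd by auto
    next
      case True
      have "d a b (Suc r) = (\<Sum>x\<le>a. \<Sum>y\<le>b. d x y 1 * d (a - x) (b - y) r)"
        using split1[OF cd n2, of a b r] True by simp
      also have "\<dots> = (\<Sum>x\<le>a. \<Sum>y\<le>b. p x y 1 * p (a - x) (b - y) r)"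
      proof (intro sum.cong refl)
        fix x y assume x: "x \<in> {..a}" and y: "y \<in> {..b}"
        show "d x y 1 * d (a - x) (b - y) r = p x y 1 * p (a - x) (b - y) r"
        proof (cases "x = 0 \<and> y = 0")
          case True then show ?thesis using M001[OF cp n2] M001[OF cd n2] by simp
        next
          case False
          show ?thesis
          proof (cases "x + y < m")
            case True
            have "(a - x) + (b - y) < m + r - 1" using False x y Suc.prems by auto
            then show ?thesis using IH[OF True] Suc.IH[of "a - x" "b - y"] r0 by simp
          next
            case False
            then have "(a - x) + (b - y) < r" using x y Suc.prems by auto
            then show ?thesis using B3p B3d by simp
          qed
        qed
      qed
      also have "\<dots> = p a b (Suc r)"
        using split1[OF cp n2, of a b r] True by simp
      finally show ?thesis .
    qed
  qed
qed

lemma comb: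
  assumes "a1 + b1 = r1" "a2 + b2 = r2" "X = a2 - a1" "Y = b2 - b1" "Z = r2 - (r1::'b::ab_group_add)"
  shows "X + Y = Z"
  unfolding assms(3,4,5) assms(1,2)[symmetric] by (simp add: algebra_simps)

lemma KEY:
  assumes I1: "(\<Sum>s\<le>1. bil n p (p i s) (d l (1 - s)) 1) = (\<Sum>t\<le>l. bil n p (p i (l - t)) (p 1 t) 1)"
    and I2: "(\<Sum>s\<le>1. bil n d (p i s) (p l (1 - s)) 1) = (\<Sum>t\<le>l. bil n p (d i (l - t)) (d 1 t) 1)"
    and IH: "\<And>a b. a + b < i + l \<Longrightarrow> d a b 1 = p a b 1"
    and i1: "1 \<le> i" and l1: "1 \<le> l" and iN: "i < n" and lN: "l < n"
  shows "of_nat (i + l) * p 1 1 1 * (d i l 1 - p i l 1) - (if i = 1 then p 1 1 1 * (d l 1 1 - p l 1 1) else 0)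
       = p 1 1 1 * (d i l 1 - p i l 1) + (if i = 1 then p 1 1 1 * (d 1 l 1 - p 1 l 1) else 0)"
proof -
  have n1: "1 < n" using n2 by simp
  have DP: "d a b r = p a b r" if "1 \<le> r" "a + b < i + l + r - 1" for r a b
    by (rule Dpow[OF IH that])
  have L1: "(\<Sum>s\<le>1. bil n p (p i s) (d l (1 - s)) 1) =
      (\<Sum>r<n. d l 1 r * p i r 1) + (\<Sum>r<n. p i 1 r * p r l 1)"
  proof -
    have "bil n p (p i 0) (d l 1) 1 = p i 0 i * (\<Sum>r<n. d l 1 r * p i r 1)"
      by (rule bil_left) (use iN s0p in auto)
    moreover have "bil n p (p i 1) (d l 0) 1 = d l 0 l * (\<Sum>r<n. p i 1 r * p r l 1)"
      by (rule bil_right) (use lN s0d in auto)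
    ultimately show ?thesis using d0p[OF iN] d0d[OF lN] by (simp add: sum_upto1)
  qed
  have L2: "(\<Sum>s\<le>1. bil n d (p i s) (p l (1 - s)) 1) =
      (\<Sum>r<n. p l 1 r * d i r 1) + (\<Sum>r<n. p i 1 r * d r l 1)"
  proof -
    have "bil n d (p i 0) (p l 1) 1 = p i 0 i * (\<Sum>r<n. p l 1 r * d i r 1)"
      by (rule bil_left) (use iN s0p in auto)
    moreover have "bil n d (p i 1) (p l 0) 1 = p l 0 l * (\<Sum>r<n. p i 1 r * d r l 1)"
      by (rule bil_right) (use lN s0p in auto)
    ultimately show ?thesis using d0p[OF iN] d0p[OF lN] by (simp add: sum_upto1)
  qed
  have R1: "(\<Sum>t\<le>l. bil n p (p i (l - t)) (p 1 t) 1) =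
      (\<Sum>t\<le>l. \<Sum>r<n. p 1 t 1 * p i (l - t) r * p r 1 1)"
  proof (rule sum.cong)
    fix t assume "t \<in> {..l}"
    have "bil n p (p i (l - t)) (p 1 t) 1 = p 1 t 1 * (\<Sum>r<n. p i (l - t) r * p r 1 1)"
      by (rule bil_right) (use n1 s1p in auto)
    then show "bil n p (p i (l - t)) (p 1 t) 1 = (\<Sum>r<n. p 1 t 1 * p i (l - t) r * p r 1 1)"
      by (simp add: sum_distrib_left mult.assoc)
  qed simp
  have R2: "(\<Sum>t\<le>l. bil n p (d i (l - t)) (d 1 t) 1) =
      (\<Sum>t\<le>l. \<Sum>r<n. d 1 t 1 * d i (l - t) r * p r 1 1)"
  proof (rule sum.cong)
    fix t assume "t \<in> {..l}"
    have "bil n p (d i (l - t)) (d 1 t) 1 = d 1 t 1 * (\<Sum>r<n. d i (l - t) r * p r 1 1)"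
      by (rule bil_right) (use n1 s1d in auto)
    then show "bil n p (d i (l - t)) (d 1 t) 1 = (\<Sum>r<n. d 1 t 1 * d i (l - t) r * p r 1 1)"
      by (simp add: sum_distrib_left mult.assoc)
  qed simp
  have A1: "(\<Sum>r<n. p l 1 r * (d i r 1 - p i r 1)) = p l 1 l * (d i l 1 - p i l 1)"
  proof (rule sum_single)
    fix r assume r: "r \<in> {..<n}" "r \<noteq> l"
    show "p l 1 r * (d i r 1 - p i r 1) = 0"
    proof (cases "r < l")
      case True then show ?thesis using IH[of i r] by simp
    next
      case False then show ?thesis using r Y1p[of l r 1] by simp
    qed
  qed (use lN in auto)
  have A2: "(\<Sum>r<n. (d l 1 r - p l 1 r) * p i r 1) =
      (if i = 1 then (d l 1 1 - p l 1 1) * p 1 1 1 else 0)"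
  proof (cases "i = 1")
    case True
    have "(\<Sum>r<n. (d l 1 r - p l 1 r) * p i r 1) = (d l 1 1 - p l 1 1) * p i 1 1"
    proof (rule sum_single)
      fix r assume r: "r \<in> {..<n}" "r \<noteq> 1"
      show "(d l 1 r - p l 1 r) * p i r 1 = 0"
      proof (cases "r = 0")
        case True then show ?thesis by (simp add: cntp cntd)
      next
        case False
        then have "d l 1 r = p l 1 r" using DP[of r l 1] r True by simp
        then show ?thesis by simp
      qed
    qed (use n1 in auto)
    then show ?thesis using True by simp
  next
    case False
    have "(\<Sum>r<n. (d l 1 r - p l 1 r) * p i r 1) = 0"
    proof (rule sum.neutral, rule ballI)
      fix r assume r: "r \<in> {..<n}"
      show "(d l 1 r - p l 1 r) * p i r 1 = 0"
      proof (cases "r = 0")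
        case True then show ?thesis by (simp add: cntp cntd)
      next
        case r0: False
        then have "d l 1 r = p l 1 r" using DP[of r l 1] False i1 by simp
        then show ?thesis by simp
      qed
    qed
    then show ?thesis using False by simp
  qed
  have A: "(\<Sum>r<n. p l 1 r * d i r 1) - (\<Sum>r<n. d l 1 r * p i r 1) =
      of_nat l * p 1 1 1 * (d i l 1 - p i l 1) - (if i = 1 then p 1 1 1 * (d l 1 1 - p l 1 1) else 0)"
  proof -
    have "(\<Sum>r<n. p l 1 r * d i r 1) - (\<Sum>r<n. d l 1 r * p i r 1) =
        (\<Sum>r<n. p l 1 r * d i r 1 - d l 1 r * p i r 1)" by (simp only: sum_subtractf)
    also have "\<dots> = (\<Sum>r<n. p l 1 r * (d i r 1 - p i r 1) - (d l 1 r - p l 1 r) * p i r 1)"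
      by (rule sum.cong) (auto simp: algebra_simps)
    also have "\<dots> = (\<Sum>r<n. p l 1 r * (d i r 1 - p i r 1)) - (\<Sum>r<n. (d l 1 r - p l 1 r) * p i r 1)"
      by (simp only: sum_subtractf)
    also have "\<dots> = p l 1 l * (d i l 1 - p i l 1) - (if i = 1 then (d l 1 1 - p l 1 1) * p 1 1 1 else 0)"
      by (simp only: A1 A2)
    finally have X: "(\<Sum>r<n. p l 1 r * d i r 1) - (\<Sum>r<n. d l 1 r * p i r 1) =
      p l 1 l * (d i l 1 - p i l 1) - (if i = 1 then (d l 1 1 - p l 1 1) * p 1 1 1 else 0)" .
    show ?thesis using X[unfolded Zp[OF lN l1]] by (cases "i = 1") (simp_all add: algebra_simps)
  qed
  have B: "(\<Sum>r<n. p i 1 r * d r l 1) - (\<Sum>r<n. p i 1 r * p r l 1) =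
      of_nat i * p 1 1 1 * (d i l 1 - p i l 1)"
  proof -
    have "(\<Sum>r<n. p i 1 r * d r l 1) - (\<Sum>r<n. p i 1 r * p r l 1) =
        (\<Sum>r<n. p i 1 r * d r l 1 - p i 1 r * p r l 1)" by (simp only: sum_subtractf)
    also have "\<dots> = (\<Sum>r<n. p i 1 r * (d r l 1 - p r l 1))"
      by (rule sum.cong) (auto simp: algebra_simps)
    also have "\<dots> = p i 1 i * (d i l 1 - p i l 1)"
    proof (rule sum_single)
      fix r assume r: "r \<in> {..<n}" "r \<noteq> i"
      show "p i 1 r * (d r l 1 - p r l 1) = 0"
      proof (cases "r < i")
        case True then show ?thesis using IH[of r l] by simp
      next
        case False then show ?thesis using r Y1p[of i r 1] by simp
      qed
    qed (use iN in auto)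
    finally show ?thesis using Zp[OF iN i1] by simp
  qed
  have C1: "(\<Sum>t\<le>l. \<Sum>r<n. d 1 t 1 * (d i (l - t) r - p i (l - t) r) * p r 1 1) =
       d 1 0 1 * (d i (l - 0) 1 - p i (l - 0) 1) * p 1 1 1"
  proof -
    have "(\<Sum>t\<le>l. \<Sum>r<n. d 1 t 1 * (d i (l - t) r - p i (l - t) r) * p r 1 1) =
       (\<Sum>(t,r)\<in>{(0,1)}. d 1 t 1 * (d i (l - t) r - p i (l - t) r) * p r 1 1)"
    proof (rule sum2_supp)
      fix t r assume t: "t \<in> {..l}" and r: "r \<in> {..<n}" and nS: "(t, r) \<notin> {(0, 1)}"
      show "d 1 t 1 * (d i (l - t) r - p i (l - t) r) * p r 1 1 = 0"
      proof (cases "r = 0")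
        case True then show ?thesis using psip[of 1] by simp
      next
        case False
        have "i + (l - t) < i + l + r - 1" using False nS t by auto
        then have "d i (l - t) r = p i (l - t) r" using DP[of r i "l - t"] False by simp
        then show ?thesis by simp
      qed
    qed (use n1 in auto)
    then show ?thesis by simp
  qed
  have C2: "(\<Sum>t\<le>l. \<Sum>r<n. (d 1 t 1 - p 1 t 1) * p i (l - t) r * p r 1 1) =
       (if i = 1 then (d 1 l 1 - p 1 l 1) * p 1 (l - l) 1 * p 1 1 1 else 0)"
  proof (cases "i = 1")
    case True
    have "(\<Sum>t\<le>l. \<Sum>r<n. (d 1 t 1 - p 1 t 1) * p i (l - t) r * p r 1 1) =
       (\<Sum>(t,r)\<in>{(l,1)}. (d 1 t 1 - p 1 t 1) * p i (l - t) r * p r 1 1)"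
    proof (rule sum2_supp)
      fix t r assume t: "t \<in> {..l}" and r: "r \<in> {..<n}" and nS: "(t, r) \<notin> {(l, 1)}"
      show "(d 1 t 1 - p 1 t 1) * p i (l - t) r * p r 1 1 = 0"
      proof (cases "r = 0")
        case True then show ?thesis using psip[of 1] by simp
      next
        case r0: False
        show ?thesis
        proof (cases "t < l")
          case tl: True
          then have "d 1 t 1 = p 1 t 1" using IH[of 1 t] True by simp
          then show ?thesis by simp
        next
          case False
          then have "t = l" "r \<noteq> 1" using t nS by auto
          then show ?thesis using s0p[of r 1] True by simp
        qed
      qed
    qed (use n1 in auto)
    then show ?thesis using True by simp
  next
    case False
    have "(\<Sum>t\<le>l. \<Sum>r<n. (d 1 t 1 - p 1 t 1) * p i (l - t) r * p r 1 1) = 0"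
    proof (intro sum.neutral ballI)
      fix t r assume t: "t \<in> {..l}" and r: "r \<in> {..<n}"
      have "1 + t < i + l" using t False i1 by auto
      then have "d 1 t 1 = p 1 t 1" using IH by simp
      then show "(d 1 t 1 - p 1 t 1) * p i (l - t) r * p r 1 1 = 0" by simp
    qed
    then show ?thesis using False by simp
  qed
  have C: "(\<Sum>t\<le>l. bil n p (d i (l - t)) (d 1 t) 1) - (\<Sum>t\<le>l. bil n p (p i (l - t)) (p 1 t) 1) =
      p 1 1 1 * (d i l 1 - p i l 1) + (if i = 1 then p 1 1 1 * (d 1 l 1 - p 1 l 1) else 0)"
  proof -
    have "(\<Sum>t\<le>l. bil n p (d i (l - t)) (d 1 t) 1) - (\<Sum>t\<le>l. bil n p (p i (l - t)) (p 1 t) 1) =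
      (\<Sum>t\<le>l. \<Sum>r<n. d 1 t 1 * (d i (l - t) r - p i (l - t) r) * p r 1 1) +
      (\<Sum>t\<le>l. \<Sum>r<n. (d 1 t 1 - p 1 t 1) * p i (l - t) r * p r 1 1)"
    proof -
      have "(\<Sum>t\<le>l. \<Sum>r<n. d 1 t 1 * d i (l - t) r * p r 1 1) - (\<Sum>t\<le>l. \<Sum>r<n. p 1 t 1 * p i (l - t) r * p r 1 1)
        = (\<Sum>t\<le>l. (\<Sum>r<n. d 1 t 1 * d i (l - t) r * p r 1 1) - (\<Sum>r<n. p 1 t 1 * p i (l - t) r * p r 1 1))"
        by (simp only: sum_subtractf)
      also have "\<dots> = (\<Sum>t\<le>l. \<Sum>r<n. d 1 t 1 * (d i (l - t) r - p i (l - t) r) * p r 1 1 +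
           (d 1 t 1 - p 1 t 1) * p i (l - t) r * p r 1 1)"
      proof (rule sum.cong)
        fix t assume "t \<in> {..l}"
        have "(\<Sum>r<n. d 1 t 1 * d i (l - t) r * p r 1 1) - (\<Sum>r<n. p 1 t 1 * p i (l - t) r * p r 1 1)
           = (\<Sum>r<n. d 1 t 1 * d i (l - t) r * p r 1 1 - p 1 t 1 * p i (l - t) r * p r 1 1)"
          by (simp only: sum_subtractf)
        also have "\<dots> = (\<Sum>r<n. d 1 t 1 * (d i (l - t) r - p i (l - t) r) * p r 1 1 +
           (d 1 t 1 - p 1 t 1) * p i (l - t) r * p r 1 1)"
          by (rule sum.cong) (auto simp: algebra_simps)
        finally show "(\<Sum>r<n. d 1 t 1 * d i (l - t) r * p r 1 1) - (\<Sum>r<n. p 1 t 1 * p i (l - t) r * p r 1 1)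
           = (\<Sum>r<n. d 1 t 1 * (d i (l - t) r - p i (l - t) r) * p r 1 1 +
           (d 1 t 1 - p 1 t 1) * p i (l - t) r * p r 1 1)" .
      qed simp
      also have "\<dots> = (\<Sum>t\<le>l. \<Sum>r<n. d 1 t 1 * (d i (l - t) r - p i (l - t) r) * p r 1 1) +
          (\<Sum>t\<le>l. \<Sum>r<n. (d 1 t 1 - p 1 t 1) * p i (l - t) r * p r 1 1)"
        by (simp only: sum.distrib)
      finally show ?thesis unfolding R1 R2 .
    qed
    note X = this
    have e1: "d 1 0 1 = 1" "p 1 (l - l) 1 = 1" using fidd[of 1] fidp[of 1] by simp_all
    show ?thesis using X[unfolded C1 C2 e1] by (cases "i = 1") (simp_all add: mult_ac)
  qed
  have "of_nat l * p 1 1 1 * (d i l 1 - p i l 1) - (if i = 1 then p 1 1 1 * (d l 1 1 - p l 1 1) else 0)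
     + of_nat i * p 1 1 1 * (d i l 1 - p i l 1) =
     p 1 1 1 * (d i l 1 - p i l 1) + (if i = 1 then p 1 1 1 * (d 1 l 1 - p 1 l 1) else 0)"
    by (rule comb[OF I1[unfolded L1 R1] I2[unfolded L2 R2] A[symmetric] B[symmetric] C[unfolded R1 R2, symmetric]])
  then show ?thesis by (simp add: algebra_simps)
qed

lemma dp1:
  assumes I1: "\<And>i l. i < n \<Longrightarrow> l < n \<Longrightarrow>
      (\<Sum>s\<le>1. bil n p (p i s) (d l (1 - s)) 1) = (\<Sum>t\<le>l. bil n p (p i (l - t)) (p 1 t) 1)"
    and I2: "\<And>i l. i < n \<Longrightarrow> l < n \<Longrightarrow>
      (\<Sum>s\<le>1. bil n d (p i s) (p l (1 - s)) 1) = (\<Sum>t\<le>l. bil n p (d i (l - t)) (d 1 t) 1)"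
    and c0: "p 1 1 1 \<noteq> 0"
  shows "d a b 1 = p a b 1"
proof -
  have "\<forall>a b. a + b = m \<longrightarrow> d a b 1 = p a b 1" for m
  proof (induction m rule: less_induct)
    case (less m)
    have IH: "d a b 1 = p a b 1" if "a + b < m" for a b
      using less.IH[OF that] by simp
    have easy: "d a b 1 = p a b 1" if ab0: "a = 0 \<or> b = 0 \<or> n \<le> a \<or> n \<le> b" for a b
    proof -
      consider "a = 0" | "b = 0" | "n \<le> a \<or> n \<le> b" using ab0 by blast
      then show ?thesis
      proof cases
        case 1 then show ?thesis using psip[of b] psid[of b] by simp
      next
        case 2 then show ?thesis using fidp[of a] fidd[of a] by simp
      next
        case 3 then show ?thesis using lzp[of a b 1] lzd[of a b 1] by auto
      qed
    qed
    have big: "d a b 1 = p a b 1" if ab: "a + b = m" "2 \<le> a" for a b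
    proof (cases "a = 0 \<or> b = 0 \<or> n \<le> a \<or> n \<le> b")
      case True then show ?thesis using easy by blast
    next
      case False
      have aN: "a < n" and bN: "b < n" and a1: "1 \<le> a" and b1: "1 \<le> b" using False by auto
      have IH': "\<And>x y. x + y < a + b \<Longrightarrow> d x y 1 = p x y 1" unfolding ab(1) by (rule IH)
      note K0 = KEY[OF I1[OF aN bN] I2[OF aN bN] IH' a1 b1 aN bN]
      have na: "a \<noteq> 1" using ab by simp
      have "of_nat (a + b) * p 1 1 1 * (d a b 1 - p a b 1) - 0 = p 1 1 1 * (d a b 1 - p a b 1) + 0"
        using K0 na by simp
      then have "of_nat (a + b) * p 1 1 1 * (d a b 1 - p a b 1) = of_nat 1 * p 1 1 1 * (d a b 1 - p a b 1)"
        by simp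
      then have "d a b 1 - p a b 1 = 0" by (rule cancel) (use c0 ab in auto)
      then show ?thesis by simp
    qed
    show ?case
    proof (intro allI impI)
      fix a b assume ab: "a + b = m"
      show "d a b 1 = p a b 1"
      proof (cases "a = 0 \<or> b = 0 \<or> n \<le> a \<or> n \<le> b")
        case True then show ?thesis using easy by blast
      next
        case False
        show ?thesis
        proof (cases "2 \<le> a")
          case True show ?thesis by (rule big[OF ab True])
        next
          case a1: False
          then have a1: "a = 1" using False by simp
          have K: "of_nat (1 + b) * p 1 1 1 * (d 1 b 1 - p 1 b 1) - p 1 1 1 * (d b 1 1 - p b 1 1)
              = p 1 1 1 * (d 1 b 1 - p 1 b 1) + p 1 1 1 * (d 1 b 1 - p 1 b 1)"
          proof -
            have oN: "1 < n" using n2 by simp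
            have bN: "b < n" and b1: "1 \<le> b" using False by auto
            have IH': "\<And>x y. x + y < 1 + b \<Longrightarrow> d x y 1 = p x y 1" using ab a1 IH by simp
            note K0 = KEY[OF I1[OF oN bN] I2[OF oN bN] IH' order.refl b1 oN bN]
            then show ?thesis by simp
          qed
          show ?thesis
          proof (cases "b = 1")
            case True
            then have "of_nat 2 * p 1 1 1 * (d 1 1 1 - p 1 1 1) = of_nat 3 * p 1 1 1 * (d 1 1 1 - p 1 1 1)"
              using K by (simp add: algebra_simps)
            then have "d 1 1 1 - p 1 1 1 = 0" by (rule cancel) (use c0 in auto)
            then show ?thesis using True a1 by simp
          next
            case False2: False
            then have "d b 1 1 = p b 1 1" using big[of b 1] ab a1 False by simp
            then have "of_nat (1 + b) * p 1 1 1 * (d 1 b 1 - p 1 b 1) = of_nat 2 * p 1 1 1 * (d 1 b 1 - p 1 b 1)"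
              using K by (simp add: algebra_simps)
            then have "d 1 b 1 - p 1 b 1 = 0" by (rule cancel) (use c0 False2 in auto)
            then show ?thesis using a1 by simp
          qed
        qed
      qed
    qed
  qed
  then show ?thesis by simp
qed

end

context
  fixes n :: nat and p d :: "nat \<Rightarrow> nat \<Rightarrow> nat \<Rightarrow> 'a::field_char_0"
  assumes cp: "cmor n p" and cd: "cmor n d" and n2: "2 \<le> n"
    and psip: "\<And>c. p 0 c 1 = 0" and psid: "\<And>c. d 0 c 1 = 0"
begin

lemma s1p': "r \<noteq> 1 \<Longrightarrow> p 1 s r = 0"
  by (cases "r = 0") (auto simp: counit[OF cp n2] Y1[OF cp n2 psip])

lemma col0: "(\<Sum>r<n. M 0 x r * p 1 r 1) = (if x = 0 then p 1 0 1 else 0)"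
  if cM: "cmor n M" and psM: "\<And>c. M 0 c 1 = 0" for M :: "nat \<Rightarrow> nat \<Rightarrow> nat \<Rightarrow> 'a"
proof -
  have "(\<Sum>r<n. M 0 x r * p 1 r 1) = M 0 x 0 * p 1 0 1"
  proof (rule sum_single)
    fix r assume "r \<in> {..<n}" "r \<noteq> 0"
    then show "M 0 x r * p 1 r 1 = 0" using Y1[OF cM n2 psM, of 0 r x] by simp
  qed (use n2 in auto)
  then show ?thesis by (simp add: counit[OF cM n2])
qed

lemma rel_p:
  assumes I: "(\<Sum>s\<le>j. bil n p (p 1 s) (d 0 (j - s)) 1) = (\<Sum>t\<le>0. bil n p (p 1 (0 - t)) (p j t) 1)"
    and a0: "p 1 0 1 \<noteq> 0" and jn: "j < n"
  shows "p 1 j 1 = (\<Sum>r<n. p j 0 r * p 1 r 1)"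
proof -
  have n1: "1 < n" using n2 by simp
  have "(\<Sum>s\<le>j. bil n p (p 1 s) (d 0 (j - s)) 1) = (\<Sum>s\<le>j. p 1 s 1 * (if j - s = 0 then p 1 0 1 else 0))"
  proof (rule sum.cong)
    fix s assume "s \<in> {..j}"
    have "bil n p (p 1 s) (d 0 (j - s)) 1 = p 1 s 1 * (\<Sum>r<n. d 0 (j - s) r * p 1 r 1)"
      by (rule bil_left) (use n1 s1p' in auto)
    then show "bil n p (p 1 s) (d 0 (j - s)) 1 = p 1 s 1 * (if j - s = 0 then p 1 0 1 else 0)"
      using col0[OF cd psid] by simp
  qed simp
  also have "\<dots> = p 1 j 1 * (if j - j = 0 then p 1 0 1 else 0)"
    by (rule sum_single) auto
  finally have L: "(\<Sum>s\<le>j. bil n p (p 1 s) (d 0 (j - s)) 1) = p 1 j 1 * p 1 0 1" by simp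
  have B: "bil n p (p 1 0) (p j 0) 1 = p 1 0 1 * (\<Sum>r<n. p j 0 r * p 1 r 1)"
    by (rule bil_left) (use n1 s1p' in auto)
  have "p 1 0 1 * p 1 j 1 = p 1 j 1 * p 1 0 1" by (rule mult.commute)
  also have "\<dots> = (\<Sum>s\<le>j. bil n p (p 1 s) (d 0 (j - s)) 1)" using L by simp
  also have "\<dots> = (\<Sum>t\<le>0. bil n p (p 1 (0 - t)) (p j t) 1)" using I .
  also have "\<dots> = bil n p (p 1 0) (p j 0) 1" by simp
  finally have "p 1 0 1 * p 1 j 1 = p 1 0 1 * (\<Sum>r<n. p j 0 r * p 1 r 1)" using B by simp
  then show ?thesis using a0 by simp
qed

lemma rel_d:
  assumes I: "(\<Sum>s\<le>0. bil n p (p 1 s) (d l (0 - s)) 1) = (\<Sum>t\<le>l. bil n p (p 1 (l - t)) (p 0 t) 1)"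
    and a0: "p 1 0 1 \<noteq> 0" and ln: "l < n"
  shows "p 1 l 1 = (\<Sum>r<n. d l 0 r * p 1 r 1)"
proof -
  have n1: "1 < n" using n2 by simp
  have "(\<Sum>t\<le>l. bil n p (p 1 (l - t)) (p 0 t) 1) = (\<Sum>t\<le>l. p 1 (l - t) 1 * (if t = 0 then p 1 0 1 else 0))"
  proof (rule sum.cong)
    fix t assume "t \<in> {..l}"
    have "bil n p (p 1 (l - t)) (p 0 t) 1 = p 1 (l - t) 1 * (\<Sum>r<n. p 0 t r * p 1 r 1)"
      by (rule bil_left) (use n1 s1p' in auto)
    then show "bil n p (p 1 (l - t)) (p 0 t) 1 = p 1 (l - t) 1 * (if t = 0 then p 1 0 1 else 0)"
      using col0[OF cp psip] by simp
  qed simp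
  also have "\<dots> = p 1 (l - 0) 1 * (if (0::nat) = 0 then p 1 0 1 else 0)"
    by (rule sum_single) auto
  finally have R: "(\<Sum>t\<le>l. bil n p (p 1 (l - t)) (p 0 t) 1) = p 1 l 1 * p 1 0 1" by simp
  have B: "bil n p (p 1 0) (d l 0) 1 = p 1 0 1 * (\<Sum>r<n. d l 0 r * p 1 r 1)"
    by (rule bil_left) (use n1 s1p' in auto)
  have "p 1 0 1 * p 1 l 1 = p 1 l 1 * p 1 0 1" by (rule mult.commute)
  also have "\<dots> = (\<Sum>t\<le>l. bil n p (p 1 (l - t)) (p 0 t) 1)" using R by simp
  also have "\<dots> = (\<Sum>s\<le>0. bil n p (p 1 s) (d l (0 - s)) 1)" using I by simp
  also have "\<dots> = bil n p (p 1 0) (d l 0) 1" by simp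
  finally have "p 1 0 1 * p 1 l 1 = p 1 0 1 * (\<Sum>r<n. d l 0 r * p 1 r 1)" using B by simp
  then show ?thesis using a0 by simp
qed

end


lemma fin2: "x = y \<Longrightarrow> (a + b - 1) * c * q = (x - q * c) - (y - (a + b) * c * (q::'a::comm_ring_1))"
  by (simp add: algebra_simps)

lemma sum_except:
  assumes "finite A" "x0 \<in> A"
  shows "(\<Sum>x\<in>A. if x = x0 then 0 else f x) = sum f A - (f x0 :: 'b::ab_group_add)"
proof -
  have "sum f A = f x0 + sum f (A - {x0})" using assms by (simp add: sum.remove)
  moreover have "(\<Sum>x\<in>A. if x = x0 then 0 else f x) = 0 + (\<Sum>x\<in>A - {x0}. if x = x0 then 0 else f x)"
    using assms by (simp add: sum.remove)
  moreover have "(\<Sum>x\<in>A - {x0}. if x = x0 then 0 else f x) = sum f (A - {x0})"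
    by (rule sum.cong) auto
  ultimately show ?thesis by simp
qed

lemma sum2_except:
  assumes "finite A" "finite B" "a0 \<in> A" "h0 \<in> B"
  shows "(\<Sum>a\<in>A. \<Sum>h\<in>B. if (a, h) = (a0, h0) then 0 else F a h) =
    (\<Sum>a\<in>A. \<Sum>h\<in>B. F a h) - (F a0 h0 :: 'b::ab_group_add)"
proof -
  have "(\<Sum>a\<in>A. \<Sum>h\<in>B. if (a, h) = (a0, h0) then 0 else F a h) =
      (\<Sum>a\<in>A. (\<Sum>h\<in>B. F a h) - (if a = a0 then F a0 h0 else 0))"
  proof (rule sum.cong)
    fix a assume "a \<in> A"
    show "(\<Sum>h\<in>B. if (a, h) = (a0, h0) then 0 else F a h) =
        (\<Sum>h\<in>B. F a h) - (if a = a0 then F a0 h0 else 0)"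
    proof (cases "a = a0")
      case True
      then show ?thesis using sum_except[OF assms(2,4), of "F a"] by simp
    next
      case False then show ?thesis by simp
    qed
  qed simp
  also have "\<dots> = (\<Sum>a\<in>A. \<Sum>h\<in>B. F a h) - (\<Sum>a\<in>A. if a = a0 then F a0 h0 else 0)"
    by (simp only: sum_subtractf)
  also have "(\<Sum>a\<in>A. if a = a0 then F a0 h0 else 0) = F a0 h0"
    using assms by simp
  finally show ?thesis .
qed

context
  fixes n :: nat and p :: "nat \<Rightarrow> nat \<Rightarrow> nat \<Rightarrow> 'a::field_char_0"
  assumes cp: "cmor n p" and n2: "2 \<le> n"
    and psip: "\<And>c. p 0 c 1 = 0"
    and fidp: "\<And>a. p a 0 1 = (if a = 1 then 1 else 0)"
begin

lemma q_s1: "r \<noteq> 1 \<Longrightarrow> p 1 s r = 0"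
  by (cases "r = 0") (auto simp: counit[OF cp n2] Y1[OF cp n2 psip])
lemma q_s0: "r \<noteq> i \<Longrightarrow> p i 0 r = 0"
  using Fid[OF cp n2 fidp, of r i] lz[OF cp n2] by (cases "r < n") auto
lemma q_d0: "i < n \<Longrightarrow> p i 0 i = 1" using Fid[OF cp n2 fidp, of i i] by simp
lemma q_Z: "l < n \<Longrightarrow> 1 \<le> l \<Longrightarrow> p l 1 l = of_nat l * p 1 1 1"
  using Z1[OF cp n2 fidp, of l l] by simp
lemma q_Y: "i < k \<Longrightarrow> p i j k = 0" using Y1[OF cp n2 psip] .

lemma restrict1:
  assumes "1 \<le> i" "i < n"
  shows "(\<Sum>r<n. p i s r * X r) = (\<Sum>h\<in>{1..i}. p i s h * X h)"
proof (rule sum.mono_neutral_right)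
  show "\<forall>r\<in>{..<n} - {1..i}. p i s r * X r = 0"
  proof
    fix r assume r: "r \<in> {..<n} - {1..i}"
    show "p i s r * X r = 0"
    proof (cases "r = 0")
      case True then show ?thesis using assms by (simp add: counit[OF cp n2])
    next
      case False then have "i < r" using r by auto
      then show ?thesis using q_Y by simp
    qed
  qed
qed (use assms in auto)

lemma F1:
  assumes I: "(\<Sum>s\<le>j. bil n p (p 1 s) (p 1 (j - s)) 1) = (\<Sum>t\<le>1. bil n p (p 1 (1 - t)) (p j t) 1)"
    and j1: "1 < j" and jn: "j < n"
  shows "p j 1 1 * p 1 1 1 = p 1 1 1 * (\<Sum>a<j. p 1 a 1 * p 1 (j - a) 1)
            - (\<Sum>l\<in>{2..j}. of_nat l * p (j - l + 1) 1 1 * p 1 l 1)"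
proof -
  have n1: "1 < n" using n2 by simp
  have "(\<Sum>s\<le>j. bil n p (p 1 s) (p 1 (j - s)) 1) = (\<Sum>s\<le>j. p 1 s 1 * (p 1 (j - s) 1 * p 1 1 1))"
  proof (rule sum.cong)
    fix s assume "s \<in> {..j}"
    have "bil n p (p 1 s) (p 1 (j - s)) 1 = p 1 s 1 * (\<Sum>r<n. p 1 (j - s) r * p 1 r 1)"
      by (rule bil_left) (use n1 q_s1 in auto)
    also have "(\<Sum>r<n. p 1 (j - s) r * p 1 r 1) = p 1 (j - s) 1 * p 1 1 1"
      by (rule sum_single) (use n1 q_s1 in auto)
    finally show "bil n p (p 1 s) (p 1 (j - s)) 1 = p 1 s 1 * (p 1 (j - s) 1 * p 1 1 1)" .
  qed simp
  also have "\<dots> = (\<Sum>s<Suc j. p 1 s 1 * (p 1 (j - s) 1 * p 1 1 1))"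
    by (simp only: lessThan_Suc_atMost)
  also have "\<dots> = p 1 1 1 * (\<Sum>a<j. p 1 a 1 * p 1 (j - a) 1) + p 1 1 1 * p 1 j 1"
    using fidp[of 1] by (simp add: sum_distrib_left algebra_simps)
  finally have L: "(\<Sum>s\<le>j. bil n p (p 1 s) (p 1 (j - s)) 1) =
      p 1 1 1 * (\<Sum>a<j. p 1 a 1 * p 1 (j - a) 1) + p 1 1 1 * p 1 j 1" .
  have R0: "bil n p (p 1 1) (p j 0) 1 = p 1 1 1 * p 1 j 1"
  proof -
    have "bil n p (p 1 1) (p j 0) 1 = p 1 1 1 * (\<Sum>r<n. p j 0 r * p 1 r 1)"
      by (rule bil_left) (use n1 q_s1 in auto)
    also have "(\<Sum>r<n. p j 0 r * p 1 r 1) = p j 0 j * p 1 j 1"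
      by (rule sum_single) (use jn q_s0 in auto)
    finally show ?thesis using q_d0[OF jn] by simp
  qed
  have R1: "bil n p (p 1 0) (p j 1) 1 = p j 1 1 * p 1 1 1 + (\<Sum>l\<in>{2..j}. of_nat l * p (j - l + 1) 1 1 * p 1 l 1)"
  proof -
    have "bil n p (p 1 0) (p j 1) 1 = p 1 0 1 * (\<Sum>r<n. p j 1 r * p 1 r 1)"
      by (rule bil_left) (use n1 q_s1 in auto)
    also have "(\<Sum>r<n. p j 1 r * p 1 r 1) = (\<Sum>r\<in>{1..j}. p j 1 r * p 1 r 1)"
      using restrict1[of j 1 "\<lambda>r. p 1 r 1"] j1 jn by simp
    also have "\<dots> = p j 1 1 * p 1 1 1 + (\<Sum>r\<in>{2..j}. p j 1 r * p 1 r 1)"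
    proof -
      have "{1..j} = insert 1 {2..j}" using j1 by auto
      then show ?thesis by simp
    qed
    also have "(\<Sum>r\<in>{2..j}. p j 1 r * p 1 r 1) = (\<Sum>l\<in>{2..j}. of_nat l * p (j - l + 1) 1 1 * p 1 l 1)"
    proof (rule sum.cong)
      fix l assume l: "l \<in> {2..j}"
      then have "p j 1 l = of_nat l * p (j + 1 - l) 1 1"
        using Z1[OF cp n2 fidp, of l j] jn by auto
      moreover have "j + 1 - l = j - l + 1" using l by auto
      ultimately show "p j 1 l * p 1 l 1 = of_nat l * p (j - l + 1) 1 1 * p 1 l 1" by simp
    qed simp
    finally show ?thesis using fidp[of 1] by simp
  qed
  have "(\<Sum>t\<le>1. bil n p (p 1 (1 - t)) (p j t) 1) = bil n p (p 1 1) (p j 0) 1 + bil n p (p 1 0) (p j 1) 1"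
    by (simp add: sum_upto1)
  then have "p 1 1 1 * (\<Sum>a<j. p 1 a 1 * p 1 (j - a) 1) + p 1 1 1 * p 1 j 1 =
     p 1 1 1 * p 1 j 1 + (p j 1 1 * p 1 1 1 + (\<Sum>l\<in>{2..j}. of_nat l * p (j - l + 1) 1 1 * p 1 l 1))"
    using I L R0 R1 by simp
  then show ?thesis by (simp add: algebra_simps)
qed


lemma restrict2:
  assumes "1 \<le> i" "i < n" "1 \<le> j" "j < n"
  shows "bil n p (p i c) (p j e) 1 = (\<Sum>h\<in>{1..i}. \<Sum>l\<in>{1..j}. p i c h * p j e l * p h l 1)"
proof -
  have "bil n p (p i c) (p j e) 1 = (\<Sum>r1<n. p i c r1 * (\<Sum>r2<n. p j e r2 * p r1 r2 1))"
    by (simp add: bil_def sum_distrib_left mult.assoc)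
  also have "\<dots> = (\<Sum>h\<in>{1..i}. p i c h * (\<Sum>r2<n. p j e r2 * p h r2 1))"
    by (rule restrict1) (use assms in auto)
  also have "\<dots> = (\<Sum>h\<in>{1..i}. p i c h * (\<Sum>l\<in>{1..j}. p j e l * p h l 1))"
    using restrict1[of j e] assms by simp
  also have "\<dots> = (\<Sum>h\<in>{1..i}. \<Sum>l\<in>{1..j}. p i c h * p j e l * p h l 1)"
    by (simp add: sum_distrib_left mult.assoc)
  finally show ?thesis .
qed

lemma F2:
  assumes I: "(\<Sum>s\<le>j. bil n p (p i s) (p 1 (j - s)) 1) = (\<Sum>t\<le>1. bil n p (p i (1 - t)) (p j t) 1)"
    and i1: "1 < i" and iN: "i < n" and j1: "1 < j" and jN: "j < n"
  shows "of_nat (i + j - 1) * p 1 1 1 * p i j 1 =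
            (\<Sum>a\<le>j. \<Sum>h\<in>{1..i}. if (a, h) = (j, 1) then 0
                                    else p i a h * p 1 (j - a) 1 * p h 1 1)
            - (\<Sum>c\<le>1. \<Sum>h\<in>{1..i}. \<Sum>l\<in>{1..j}. if (h, l) = (i, j) then 0
                                    else p i c h * p j (1 - c) l * p h l 1)"
proof -
  have n1: "1 < n" using n2 by simp
  have L: "(\<Sum>s\<le>j. bil n p (p i s) (p 1 (j - s)) 1) =
      (\<Sum>a\<le>j. \<Sum>h\<in>{1..i}. p i a h * p 1 (j - a) 1 * p h 1 1)"
  proof (rule sum.cong)
    fix s assume "s \<in> {..j}"
    have "bil n p (p i s) (p 1 (j - s)) 1 = p 1 (j - s) 1 * (\<Sum>r<n. p i s r * p r 1 1)"
      by (rule bil_right) (use n1 q_s1 in auto)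
    also have "(\<Sum>r<n. p i s r * p r 1 1) = (\<Sum>h\<in>{1..i}. p i s h * p h 1 1)"
      by (rule restrict1) (use i1 iN in auto)
    finally show "bil n p (p i s) (p 1 (j - s)) 1 = (\<Sum>h\<in>{1..i}. p i s h * p 1 (j - s) 1 * p h 1 1)"
      by (simp add: sum_distrib_left algebra_simps)
  qed simp
  have TL: "(\<Sum>a\<le>j. \<Sum>h\<in>{1..i}. if (a, h) = (j, 1) then 0 else p i a h * p 1 (j - a) 1 * p h 1 1)
      = (\<Sum>s\<le>j. bil n p (p i s) (p 1 (j - s)) 1) - p i j 1 * p 1 1 1"
    unfolding L using sum2_except[of "{..j}" "{1..i}" j 1 "\<lambda>a h. p i a h * p 1 (j - a) 1 * p h 1 1"] i1 fidp[of 1]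
    by simp
  have RR: "(\<Sum>t\<le>1. bil n p (p i (1 - t)) (p j t) 1) =
     (\<Sum>c\<le>1. \<Sum>h\<in>{1..i}. \<Sum>l\<in>{1..j}. p i c h * p j (1 - c) l * p h l 1)"
  proof -
    have "(\<Sum>t\<le>1. bil n p (p i (1 - t)) (p j t) 1) = (\<Sum>c\<le>1. bil n p (p i c) (p j (1 - c)) 1)"
      by (simp add: sum_upto1 add.commute)
    also have "\<dots> = (\<Sum>c\<le>1. \<Sum>h\<in>{1..i}. \<Sum>l\<in>{1..j}. p i c h * p j (1 - c) l * p h l 1)"
      by (rule sum.cong) (use restrict2 i1 iN j1 jN in auto)
    finally show ?thesis .
  qed
  have TR: "(\<Sum>c\<le>1. \<Sum>h\<in>{1..i}. \<Sum>l\<in>{1..j}. if (h, l) = (i, j) then 0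
                                    else p i c h * p j (1 - c) l * p h l 1)
      = (\<Sum>t\<le>1. bil n p (p i (1 - t)) (p j t) 1) - (of_nat i + of_nat j) * p 1 1 1 * p i j 1"
  proof -
    have "(\<Sum>c\<le>1. \<Sum>h\<in>{1..i}. \<Sum>l\<in>{1..j}. if (h, l) = (i, j) then 0
                                    else p i c h * p j (1 - c) l * p h l 1)
        = (\<Sum>c\<le>1. (\<Sum>h\<in>{1..i}. \<Sum>l\<in>{1..j}. p i c h * p j (1 - c) l * p h l 1) - p i c i * p j (1 - c) j * p i j 1)"
    proof (rule sum.cong[OF refl])
      fix c assume "c \<in> {..(1::nat)}"
      show "(\<Sum>h\<in>{1..i}. \<Sum>l\<in>{1..j}. if (h, l) = (i, j) then 0
                                    else p i c h * p j (1 - c) l * p h l 1)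
        = (\<Sum>h\<in>{1..i}. \<Sum>l\<in>{1..j}. p i c h * p j (1 - c) l * p h l 1) - p i c i * p j (1 - c) j * p i j 1"
        by (rule sum2_except) (use i1 j1 in auto)
    qed
    also have "\<dots> = (\<Sum>c\<le>1. \<Sum>h\<in>{1..i}. \<Sum>l\<in>{1..j}. p i c h * p j (1 - c) l * p h l 1)
        - (\<Sum>c\<le>1. p i c i * p j (1 - c) j * p i j 1)"
      by (simp only: sum_subtractf)
    also have "(\<Sum>c\<le>1. p i c i * p j (1 - c) j * p i j 1) = (of_nat i + of_nat j) * p 1 1 1 * p i j 1"
      using q_d0[OF iN] q_d0[OF jN] q_Z[OF iN] q_Z[OF jN] i1 j1
      by (simp add: sum_upto1 algebra_simps)
    finally show ?thesis unfolding RR .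
  qed
  have ij: "of_nat (i + j - 1) = (of_nat i + of_nat j - 1 :: 'a)" using i1 by (simp add: of_nat_diff)
  show ?thesis unfolding TL TR ij by (rule fin2[OF I])
qed

lemma F3:
  assumes "j < n" "k < n" "1 < l" "l < n"
  shows "p j k l = (\<Sum>j1\<le>j. \<Sum>k1\<le>k.
                       if 1 \<le> j1 + k1 \<and> l - 1 \<le> (j - j1) + (k - k1)
                       then p j1 k1 1 * p (j - j1) (k - k1) (l - 1) else 0)"
proof -
  have l: "Suc (l - 1) = l" using assms by simp
  have "p j k (Suc (l - 1)) = (\<Sum>j1\<le>j. \<Sum>k1\<le>k. p j1 k1 1 * p (j - j1) (k - k1) (l - 1))"
    by (rule split1[OF cp n2]) (use assms in auto)
  then have "p j k l = (\<Sum>j1\<le>j. \<Sum>k1\<le>k. p j1 k1 1 * p (j - j1) (k - k1) (l - 1))"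
    unfolding l .
  also have "\<dots> = (\<Sum>j1\<le>j. \<Sum>k1\<le>k.
                       if 1 \<le> j1 + k1 \<and> l - 1 \<le> (j - j1) + (k - k1)
                       then p j1 k1 1 * p (j - j1) (k - k1) (l - 1) else 0)"
  proof (intro sum.cong refl)
    fix j1 k1
    show "p j1 k1 1 * p (j - j1) (k - k1) (l - 1) = (if 1 \<le> j1 + k1 \<and> l - 1 \<le> (j - j1) + (k - k1)
                       then p j1 k1 1 * p (j - j1) (k - k1) (l - 1) else 0)"
    proof (cases "1 \<le> j1 + k1")
      case False then have "j1 = 0" "k1 = 0" by auto
      then show ?thesis using M001[OF cp n2] by simp
    next
      case True
      show ?thesis
      proof (cases "l - 1 \<le> (j - j1) + (k - k1)")
        case False then show ?thesis using B3[OF cp n2, of "j - j1" "k - k1" "l - 1"] by simp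
      qed (use True in simp)
    qed
  qed
  finally show ?thesis .
qed

end


theorem proposition4p5:
  fixes n :: nat and p d :: "nat \<Rightarrow> nat \<Rightarrow> nat \<Rightarrow> 'a::field_char_0"
  assumes "alg_closed TYPE('a)"
    and "2 \<le> n"
    and "regular_q_cycle n p d"
    and "p 1 1 1 \<noteq> 0"
  shows "d = p
    \<and> (\<forall>j<n. p j 0 1 = (if j = 1 then 1 else 0))
    \<and> (\<forall>j. 1 < j \<and> j < n \<longrightarrow>
          p j 1 1 * p 1 1 1 =
            p 1 1 1 * (\<Sum>a<j. p 1 a 1 * p 1 (j - a) 1)
            - (\<Sum>l\<in>{2..j}. of_nat l * p (j - l + 1) 1 1 * p 1 l 1))
    \<and> (\<forall>i j. 1 < i \<and> i < n \<and> 1 < j \<and> j < n \<longrightarrow>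
          of_nat (i + j - 1) * p 1 1 1 * p i j 1 =
            (\<Sum>a\<le>j. \<Sum>h\<in>{1..i}. if (a, h) = (j, 1) then 0
                                    else p i a h * p 1 (j - a) 1 * p h 1 1)
            - (\<Sum>c\<le>1. \<Sum>h\<in>{1..i}. \<Sum>l\<in>{1..j}. if (h, l) = (i, j) then 0
                                    else p i c h * p j (1 - c) l * p h l 1))
    \<and> (\<forall>j k l. j < n \<and> k < n \<and> 1 < l \<and> l < n \<longrightarrow>
          p j k l = (\<Sum>j1\<le>j. \<Sum>k1\<le>k.
                       if 1 \<le> j1 + k1 \<and> l - 1 \<le> (j - j1) + (k - k1)
                       then p j1 k1 1 * p (j - j1) (k - k1) (l - 1) else 0))"
proof -
  note n2 = assms(2) and c0 = assms(4)
  have n1: "1 < n" using n2 by simp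
  have rq: "regular_q_magma n p d" using assms(3) unfolding regular_q_cycle_def by blast
  have ids: "\<forall>i<n. \<forall>j<n. \<forall>l<n. \<forall>k<n.
        (\<Sum>s\<le>j. bil n p (p i s) (d l (j - s)) k) = (\<Sum>t\<le>l. bil n p (p i (l - t)) (p j t) k) \<and>
        (\<Sum>s\<le>j. bil n d (p i s) (p l (j - s)) k) = (\<Sum>t\<le>l. bil n p (d i (l - t)) (d j t) k) \<and>
        (\<Sum>s\<le>j. bil n d (d i s) (d l (j - s)) k) = (\<Sum>t\<le>l. bil n d (d i (l - t)) (p j t) k)"
    using assms(3) unfolding regular_q_cycle_def by blast
  have E1: "(\<Sum>s\<le>j. bil n p (p i s) (d l (j - s)) 1) = (\<Sum>t\<le>l. bil n p (p i (l - t)) (p j t) 1)"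
    if "i < n" "j < n" "l < n" for i j l using ids that n1 by blast
  have E2: "(\<Sum>s\<le>j. bil n d (p i s) (p l (j - s)) 1) = (\<Sum>t\<le>l. bil n p (d i (l - t)) (d j t) 1)"
    if "i < n" "j < n" "l < n" for i j l using ids that n1 by blast
  have cp: "cmor n p" and cd: "cmor n d" using rq unfolding regular_q_magma_def cmor_def by blast+
  obtain L R where cL: "cmor n L" and cR: "cmor n R" and inv: "\<forall>i<n. \<forall>j<n. \<forall>k<n.
           (\<Sum>s\<le>j. \<Sum>r<n. L i s r * p r (j - s) k) = (if j = 0 \<and> k = i then 1 else 0) \<and>
           (\<Sum>s\<le>j. \<Sum>r<n. p i s r * L r (j - s) k) = (if j = 0 \<and> k = i then 1 else 0) \<and>
           (\<Sum>s\<le>j. \<Sum>r<n. d i (j - s) r * R r s k) = (if j = 0 \<and> k = i then 1 else 0) \<and>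
           (\<Sum>s\<le>j. \<Sum>r<n. R i (j - s) r * d r s k) = (if j = 0 \<and> k = i then 1 else 0)"
    using rq unfolding regular_q_magma_def cmor_def by blast
  have a0: "p 1 0 1 \<noteq> 0"
  proof -
    have "(\<Sum>s\<le>0. \<Sum>r<n. L 1 s r * p r (0 - s) 1) = (if (0::nat) = 0 \<and> (1::nat) = 1 then 1 else 0)"
      using inv n1 by blast
    then have "(\<Sum>r<n. L 1 0 r * p r 0 1) = 1" by simp
    moreover have "(\<Sum>r<n. L 1 0 r * p r 0 1) = L 1 0 1 * p 1 0 1"
    proof (rule sum_single)
      fix r assume "r \<in> {..<n}" "r \<noteq> 1"
      then show "L 1 0 r * p r 0 1 = 0"
        by (cases "r = 0") (auto simp: counit[OF cL n2] B3[OF cL n2])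
    qed (use n1 in auto)
    ultimately show ?thesis by auto
  qed
  have b0: "d 1 0 1 \<noteq> 0"
  proof -
    have "(\<Sum>s\<le>0. \<Sum>r<n. R 1 (0 - s) r * d r s 1) = (if (0::nat) = 0 \<and> (1::nat) = 1 then 1 else 0)"
      using inv n1 by blast
    then have "(\<Sum>r<n. R 1 0 r * d r 0 1) = 1" by simp
    moreover have "(\<Sum>r<n. R 1 0 r * d r 0 1) = R 1 0 1 * d 1 0 1"
    proof (rule sum_single)
      fix r assume "r \<in> {..<n}" "r \<noteq> 1"
      then show "R 1 0 r * d r 0 1 = 0"
        by (cases "r = 0") (auto simp: counit[OF cR n2] B3[OF cR n2])
    qed (use n1 in auto)
    ultimately show ?thesis by auto
  qed
  have psip: "\<And>c. p 0 c 1 = 0" using psi_zero[OF cp n2 a0] .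
  have psid: "\<And>c. d 0 c 1 = 0" using psi_zero[OF cd n2 b0] .
  have fidp: "\<And>a. p a 0 1 = (if a = 1 then 1 else 0)"
  proof (rule Gid[OF cp n2, of "\<lambda>r. p 1 r 1"])
    show "p 1 1 1 \<noteq> 0" by (rule c0)
    fix j assume jn: "j < n"
    show "p 1 j 1 = (\<Sum>r<n. p j 0 r * p 1 r 1)"
      by (rule rel_p[OF cp cd n2 psip psid E1[OF n1 jn] a0 jn]) (use n1 in simp)
  qed
  have fidd: "\<And>a. d a 0 1 = (if a = 1 then 1 else 0)"
  proof (rule Gid[OF cd n2, of "\<lambda>r. p 1 r 1"])
    show "p 1 1 1 \<noteq> 0" by (rule c0)
    fix j assume jn: "j < n"
    have z: "0 < n" using n1 by simp
    show "p 1 j 1 = (\<Sum>r<n. d j 0 r * p 1 r 1)"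
      by (rule rel_d[OF cp cd n2 psip psid E1[OF n1 z jn] a0 jn])
  qed
  have d1: "\<And>a b. d a b 1 = p a b 1"
  proof (rule dp1[OF cp cd n2 psip psid fidp fidd _ _ c0])
    fix i l assume "i < n" "l < n"
    then show "(\<Sum>s\<le>1. bil n p (p i s) (d l (1 - s)) 1) = (\<Sum>t\<le>l. bil n p (p i (l - t)) (p 1 t) 1)"
      using E1 n1 by blast
  next
    fix i l assume "i < n" "l < n"
    then show "(\<Sum>s\<le>1. bil n d (p i s) (p l (1 - s)) 1) = (\<Sum>t\<le>l. bil n p (d i (l - t)) (d 1 t) 1)"
      using E2 n1 by blast
  qed
  have dp: "d = p"
  proof (intro ext)
    fix i j k
    show "d i j k = p i j k"
    proof (cases "k = 0")
      case True then show ?thesis by (simp add: counit[OF cp n2] counit[OF cd n2])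
    next
      case False
      show ?thesis
        by (rule Dpow[OF cp cd n2 psip psid fidp fidd, of "i + j + 1"]) (use d1 False in auto)
    qed
  qed
  have P1: "\<forall>j. 1 < j \<and> j < n \<longrightarrow>
          p j 1 1 * p 1 1 1 =
            p 1 1 1 * (\<Sum>a<j. p 1 a 1 * p 1 (j - a) 1)
            - (\<Sum>l\<in>{2..j}. of_nat l * p (j - l + 1) 1 1 * p 1 l 1)"
  proof (intro allI impI)
    fix j assume j: "1 < j \<and> j < n"
    show "p j 1 1 * p 1 1 1 = p 1 1 1 * (\<Sum>a<j. p 1 a 1 * p 1 (j - a) 1)
            - (\<Sum>l\<in>{2..j}. of_nat l * p (j - l + 1) 1 1 * p 1 l 1)"
      by (rule F1[OF cp n2 psip fidp]) (use E1[of 1 j 1] j n1 dp in auto)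
  qed
  have P2: "\<forall>i j. 1 < i \<and> i < n \<and> 1 < j \<and> j < n \<longrightarrow>
          of_nat (i + j - 1) * p 1 1 1 * p i j 1 =
            (\<Sum>a\<le>j. \<Sum>h\<in>{1..i}. if (a, h) = (j, 1) then 0
                                    else p i a h * p 1 (j - a) 1 * p h 1 1)
            - (\<Sum>c\<le>1. \<Sum>h\<in>{1..i}. \<Sum>l\<in>{1..j}. if (h, l) = (i, j) then 0
                                    else p i c h * p j (1 - c) l * p h l 1)"
  proof (intro allI impI)
    fix i j assume ij: "1 < i \<and> i < n \<and> 1 < j \<and> j < n"
    show "of_nat (i + j - 1) * p 1 1 1 * p i j 1 =
            (\<Sum>a\<le>j. \<Sum>h\<in>{1..i}. if (a, h) = (j, 1) then 0
                                    else p i a h * p 1 (j - a) 1 * p h 1 1)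
            - (\<Sum>c\<le>1. \<Sum>h\<in>{1..i}. \<Sum>l\<in>{1..j}. if (h, l) = (i, j) then 0
                                    else p i c h * p j (1 - c) l * p h l 1)"
      by (rule F2[OF cp n2 psip fidp]) (use E1[of i j 1] ij n1 dp in auto)
  qed
  have P3: "\<forall>j k l. j < n \<and> k < n \<and> 1 < l \<and> l < n \<longrightarrow>
          p j k l = (\<Sum>j1\<le>j. \<Sum>k1\<le>k.
                       if 1 \<le> j1 + k1 \<and> l - 1 \<le> (j - j1) + (k - k1)
                       then p j1 k1 1 * p (j - j1) (k - k1) (l - 1) else 0)"
    using F3[OF cp n2 psip fidp] by blast
  show ?thesis using dp fidp P1 P2 P3 by simp
qed


end
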